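(* Let $G$ and $H$ be graphs and let $\ell\ge 1$ be an integer. If $G$ has an $H$-partition of layered width $\ell$, then $\mathrm{tn}(G)\le 3\ell\cdot \mathrm{tn}(H)$.
   Context: All graphs are finite, simple and undirected. A $t$-track assignment of a graph $G$ is a partition of $V(G)$ into $t$ sets $V_1,\dots,V_t$ (tracks), each an independent set of $G$, together with a total order $<_i$ on each $V_i$. An X-crossing consists of two edges $(u,v)$ and $(x,y)$ with $u,x\in V_i$, $v,y\in V_j$ ($i\neq j$), $u<_i x$ and $y<_j v$. A $t$-track layout is a $t$-track assignment with no X-crossing; the track number $\mathrm{tn}(G)$ is the minimum $t$ for which $G$ has a $t$-track layout. An $H$-partition of $G$ is a partition of $V(G)$ into disjoint bags $\{A_x : x\in V(H)\}$ indexed by $V(H)$ such that for every edge $(u,v)\in E(G)$ either $u,v\in A_x$ for some $x$, or there is an edge $(x,y)\in E(H)$ with $u\in A_x$, $v\in A_y$. A layering of $G$ is an ordered partition $(V_0,V_1,\dots)$ of $V(G)$ such that for every edge $(v,w)$ with $v\in V_i$, $w\in V_j$ we have $|i-j|\le 1$. The layered width of an $H$-partition is the minimum $\ell$ such that for some layering $(V_0,V_1,\dots)$ of $G$, $|A_x\cap V_i|\le \ell$ for every $x\in V(H)$ and every $i\ge 0$. *)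

theory Defs
  imports Main
begin

definition graph :: "'a set \<Rightarrow> 'a set set \<Rightarrow> bool" where
  "graph V E \<longleftrightarrow> finite V \<and> (\<forall>e\<in>E. \<exists>u v. e = {u, v} \<and> u \<noteq> v \<and> u \<in> V \<and> v \<in> V)"

definition track_layout ::
  "'a set \<Rightarrow> 'a set set \<Rightarrow> nat \<Rightarrow> ('a \<Rightarrow> nat) \<Rightarrow> (nat \<Rightarrow> ('a \<times> 'a) set) \<Rightarrow> bool" where
  "track_layout V E t tr lt \<longleftrightarrow>
     (\<forall>v\<in>V. tr v < t) \<and>
     (\<forall>u v. {u, v} \<in> E \<longrightarrow> tr u \<noteq> tr v) \<and>
     (\<forall>i<t. strict_linear_order_on {v\<in>V. tr v = i} (lt i)) \<and>
     (\<forall>u v x y. {u, v} \<in> E \<longrightarrow> {x, y} \<in> E \<longrightarrow> tr u = tr x \<longrightarrow> tr v = tr y \<longrightarrow>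
        tr u \<noteq> tr v \<longrightarrow> (u, x) \<in> lt (tr u) \<longrightarrow> (y, v) \<in> lt (tr v) \<longrightarrow> False)"

definition track_number :: "'a set \<Rightarrow> 'a set set \<Rightarrow> nat" where
  "track_number V E = (LEAST t. \<exists>tr lt. track_layout V E t tr lt)"

text \<open>An H-partition of G, given by the map f sending each vertex of G to the index
  of its bag (bag A_x = {v. f v = x}).\<close>
definition H_partition ::
  "'a set \<Rightarrow> 'a set set \<Rightarrow> 'b set \<Rightarrow> 'b set set \<Rightarrow> ('a \<Rightarrow> 'b) \<Rightarrow> bool" where
  "H_partition VG EG VH EH f \<longleftrightarrow>
     (\<forall>v\<in>VG. f v \<in> VH) \<and>
     (\<forall>u v. {u, v} \<in> EG \<longrightarrow> f u = f v \<or> {f u, f v} \<in> EH)"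

definition layering :: "'a set \<Rightarrow> 'a set set \<Rightarrow> ('a \<Rightarrow> nat) \<Rightarrow> bool" where
  "layering V E L \<longleftrightarrow> (\<forall>v w. {v, w} \<in> E \<longrightarrow> L v \<le> L w + 1 \<and> L w \<le> L v + 1)"

definition layered_width :: "'a set \<Rightarrow> 'a set set \<Rightarrow> ('a \<Rightarrow> 'b) \<Rightarrow> nat" where
  "layered_width V E f = (LEAST l. \<exists>L. layering V E L \<and>
      (\<forall>x i. card {v\<in>V. f v = x \<and> L v = i} \<le> l))"

end

theory Submission
  imports Defs
begin

lemma graph_edge:
  assumes "graph V E" "{u, v} \<in> E"
  shows "u \<in> V \<and> v \<in> V \<and> u \<noteq> v"
proof -
  obtain a b where "{u, v} = {a, b}" "a \<noteq> b" "a \<in> V" "b \<in> V"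
    using assms unfolding graph_def by blast
  then show ?thesis by (metis doubleton_eq_iff insert_absorb2 insert_iff singleton_insert_inj_eq)
qed

lemma layout_exists:
  assumes "graph V E"
  shows "\<exists>t tr lt. track_layout V E t tr lt"
proof -
  have "finite V" using assms by (simp add: graph_def)
  then obtain h where h: "bij_betw h V {0..<card V}" using ex_bij_betw_finite_nat by blast
  have "track_layout V E (card V) h (\<lambda>_. {})"
    unfolding track_layout_def
  proof (intro conjI allI impI)
    show "\<forall>v\<in>V. h v < card V" using h by (auto simp: bij_betw_def)
    fix u v assume "{u, v} \<in> E"
    then show "h u \<noteq> h v" using graph_edge[OF assms] h by (metis bij_betw_def inj_on_def)
  next
    fix i assume "i < card V"
    have "{v \<in> V. h v = i} \<subseteq> {v. h v = i} \<inter> V" by auto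
    show "strict_linear_order_on {v \<in> V. h v = i} {}"
      unfolding strict_linear_order_on_def total_on_def irrefl_def trans_def
      using h by (auto simp: bij_betw_def inj_on_def)
  qed auto
  then show ?thesis by blast
qed

lemma decode:
  fixes a b c a' b' c' l :: nat
  assumes "b < 3" "b' < 3" "c < l" "c' < l"
    and "a * (3 * l) + b * l + c = a' * (3 * l) + b' * l + c'"
  shows "a = a' \<and> b = b' \<and> c = c'"
proof -
  have m: "b * l + c < 3 * l" "b' * l + c' < 3 * l"
  proof -
    have "b \<le> 2" "b' \<le> 2" using assms by auto
    then have "b * l \<le> 2 * l" "b' * l \<le> 2 * l" by (simp_all add: mult_right_mono)
    then show "b * l + c < 3 * l" "b' * l + c' < 3 * l" using assms by linarith+
  qed
  have e: "a * (3 * l) + (b * l + c) = a' * (3 * l) + (b' * l + c')" using assms by simp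
  have "(a * (3 * l) + (b * l + c)) div (3*l) = a" using m by simp
  moreover have "(a' * (3 * l) + (b' * l + c')) div (3*l) = a'" using m by simp
  ultimately have aa: "a = a'" using e by metis
  then have e2: "b * l + c = b' * l + c'" using e by simp
  have "(b * l + c) div l = b" "(b' * l + c') div l = b'" using assms by simp_all
  then have "b = b'" using e2 by metis
  then show ?thesis using aa e2 by simp
qed


lemma k1: fixes a b c d :: nat
  assumes "a mod 3 = c mod 3" "b mod 3 = d mod 3" "a \<le> b + 1" "b \<le> a + 1" "c \<le> d + 1" "d \<le> c + 1"
  shows "int c - int a = int d - int b"
proof -
  have "b = a + 1 \<or> b = a \<or> a = b + 1" "d = c + 1 \<or> d = c \<or> c = d + 1" using assms by auto
  then show ?thesis using assms(1,2) by (auto simp: mod_Suc split: if_splits)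
qed
lemma k2: fixes a b :: nat assumes "a \<le> b + 1" "b \<le> a + 1" "a mod 3 = b mod 3" shows "a = b"
proof -
  have "b = a + 1 \<or> b = a \<or> a = b + 1" using assms by auto
  then show ?thesis using assms(3) by (auto simp: mod_Suc split: if_splits)
qed

theorem lemma7:
  fixes VG :: "'a set" and EG :: "'a set set" and VH :: "'b set" and EH :: "'b set set"
    and f :: "'a \<Rightarrow> 'b" and l :: nat
  assumes "graph VG EG" and "graph VH EH" and "l \<ge> 1"
    and "H_partition VG EG VH EH f"
    and "layered_width VG EG f = l"
  shows "track_number VG EG \<le> 3 * l * track_number VH EH"
proof -
  note gG = assms(1) and gH = assms(2)
  have finG: "finite VG" using gG by (simp add: graph_def)
  have fV: "\<And>v. v \<in> VG \<Longrightarrow> f v \<in> VH" and fE: "\<And>u v. {u, v} \<in> EG \<Longrightarrow> f u = f v \<or> {f u, f v} \<in> EH"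
    using assms(4) by (auto simp: H_partition_def)
  define tH where "tH = track_number VH EH"
  have "\<exists>tr lt. track_layout VH EH tH tr lt"
    unfolding tH_def track_number_def using layout_exists[OF gH] by (rule LeastI_ex)
  then obtain trH ltH where lay: "track_layout VH EH tH trH ltH" by blast
  have trHlt: "\<And>x. x \<in> VH \<Longrightarrow> trH x < tH" using lay by (simp add: track_layout_def)
  have trHE: "\<And>x y. {x, y} \<in> EH \<Longrightarrow> trH x \<noteq> trH y" using lay by (simp add: track_layout_def)
  have ordH: "\<And>i. i < tH \<Longrightarrow> strict_linear_order_on {v\<in>VH. trH v = i} (ltH i)"
    using lay by (simp add: track_layout_def)
  have crossH: "\<And>u v x y. {u, v} \<in> EH \<Longrightarrow> {x, y} \<in> EH \<Longrightarrow> trH u = trH x \<Longrightarrow> trH v = trH y \<Longrightarrow>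
        trH u \<noteq> trH v \<Longrightarrow> (u, x) \<in> ltH (trH u) \<Longrightarrow> (y, v) \<in> ltH (trH v) \<Longrightarrow> False"
    using lay unfolding track_layout_def by blast
  have "\<exists>L. layering VG EG L \<and> (\<forall>x i. card {v\<in>VG. f v = x \<and> L v = i} \<le> l)"
  proof -
    have "\<exists>L. layering VG EG L \<and> (\<forall>x i. card {v\<in>VG. f v = x \<and> L v = i} \<le> card VG)"
      by (rule exI[of _ "\<lambda>_. 0"]) (auto simp: layering_def finG card_mono)
    then have "\<exists>L. layering VG EG L \<and> (\<forall>x i. card {v\<in>VG. f v = x \<and> L v = i} \<le> layered_width VG EG f)"
      unfolding layered_width_def
      using LeastI_ex[where P="\<lambda>l. \<exists>L. layering VG EG L \<and> (\<forall>x i. card {v\<in>VG. f v = x \<and> L v = i} \<le> l)"] by blast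
    then show ?thesis using assms(5) by simp
  qed
  then obtain L where layL: "layering VG EG L" and cardL: "\<And>x i. card {v\<in>VG. f v = x \<and> L v = i} \<le> l"
    by blast
  define S where "S x i = {v\<in>VG. f v = x \<and> L v = i}" for x i
  have finS: "finite (S x i)" for x i using finG by (simp add: S_def)
  define g where "g x i = (SOME h. bij_betw h (S x i) {0..<card (S x i)})" for x i
  have gb: "bij_betw (g x i) (S x i) {0..<card (S x i)}" for x i
    unfolding g_def using ex_bij_betw_finite_nat[OF finS] by (rule someI_ex)
  define k where "k v = g (f v) (L v) v" for v
  have kl: "k v < l" if "v \<in> VG" for v
  proof -
    have "v \<in> S (f v) (L v)" using that by (simp add: S_def)
    then have "k v < card (S (f v) (L v))" using gb[of "f v" "L v"] unfolding k_def bij_betw_def by (metis atLeastLessThan_iff image_eqI)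
    then show ?thesis using cardL[of "f v" "L v"] by (simp add: S_def)
  qed
  have kinj: "u = v" if "u \<in> VG" "v \<in> VG" "f u = f v" "L u = L v" "k u = k v" for u v
  proof -
    have "u \<in> S (f v) (L v)" "v \<in> S (f v) (L v)" using that by (auto simp: S_def)
    then show ?thesis using gb[of "f v" "L v"] that(3,4,5) unfolding k_def bij_betw_def inj_on_def
      by metis
  qed
  define T where "T v = trH (f v) * (3 * l) + (L v mod 3) * l + k v" for v
  have dec: "trH (f u) = trH (f v) \<and> L u mod 3 = L v mod 3 \<and> k u = k v"
    if "u \<in> VG" "v \<in> VG" "T u = T v" for u v
    using decode[of "L u mod 3" "L v mod 3" "k u" l "k v" "trH (f u)" "trH (f v)"]
      kl[OF that(1)] kl[OF that(2)] that(3) unfolding T_def by simp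
  define ltG where "ltG i = {(u, v). u \<in> VG \<and> v \<in> VG \<and> T u = i \<and> T v = i \<and>
      (L u < L v \<or> (L u = L v \<and> (f u, f v) \<in> ltH (trH (f u))))}" for i
  have "track_layout VG EG (3 * l * tH) T ltG"
    unfolding track_layout_def
  proof (intro conjI allI impI ballI)
    fix v assume v: "v \<in> VG"
    have a: "trH (f v) < tH" using trHlt fV v by blast
    have b: "(L v mod 3) * l + k v < 3 * l"
    proof -
      have "L v mod 3 \<le> 2" by simp
      then have "(L v mod 3) * l \<le> 2 * l" by (simp add: mult_right_mono)
      then show ?thesis using kl[OF v] by linarith
    qed
    have "trH (f v) * (3 * l) + (3 * l) \<le> 3 * l * tH"
    proof -
      have "Suc (trH (f v)) \<le> tH" using a by simp
      then have "Suc (trH (f v)) * (3 * l) \<le> tH * (3 * l)" by (rule mult_right_mono) simp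
      then show ?thesis by (simp add: mult.commute)
    qed
    then show "T v < 3 * l * tH" using b unfolding T_def by linarith
  next
    fix u v assume e: "{u, v} \<in> EG"
    have uv: "u \<in> VG" "v \<in> VG" "u \<noteq> v" using graph_edge[OF gG e] by auto
    show "T u \<noteq> T v"
    proof
      assume "T u = T v"
      from dec[OF uv(1,2) this] have d: "trH (f u) = trH (f v)" "L u mod 3 = L v mod 3" "k u = k v" by auto
      have "f u = f v" using fE[OF e] trHE d(1) by blast
      moreover have "L u = L v"
      proof -
        have "L u \<le> L v + 1" "L v \<le> L u + 1" using layL e unfolding layering_def by blast+
        then show ?thesis using d(2) by (rule k2)
      qed
      ultimately show False using kinj[OF uv(1,2)] d(3) uv(3) by blast
    qed
  next
    fix i assume i: "i < 3 * l * tH"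
    show "strict_linear_order_on {v \<in> VG. T v = i} (ltG i)"
      unfolding strict_linear_order_on_def
    proof (intro conjI)
      show "trans (ltG i)"
      proof (rule transI)
        fix x y z assume xy: "(x, y) \<in> ltG i" and yz: "(y, z) \<in> ltG i"
        have xyz: "x \<in> VG" "y \<in> VG" "z \<in> VG" "T x = i" "T y = i" "T z = i"
          using xy yz by (auto simp: ltG_def)
        have d1: "trH (f x) = trH (f y)" "trH (f y) = trH (f z)"
          using dec xyz by metis+
        have tr: "trans (ltH (trH (f x)))" using ordH trHlt fV xyz(1)
          by (simp add: strict_linear_order_on_def)
        show "(x, z) \<in> ltG i"
          using xy yz xyz d1 tr unfolding ltG_def by (auto dest: transD)
      qed
    next
      show "irrefl (ltG i)"
      proof -
        have "(f u, f u) \<notin> ltH (trH (f u))" if "u \<in> VG" for u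
          using ordH trHlt fV that by (simp add: strict_linear_order_on_def irrefl_def)
        then show ?thesis unfolding irrefl_def ltG_def by auto
      qed
    next
      show "total_on {v \<in> VG. T v = i} (ltG i)"
      proof (rule total_onI)
        fix u v assume u: "u \<in> {v \<in> VG. T v = i}" and v: "v \<in> {v \<in> VG. T v = i}" and ne: "u \<noteq> v"
        have d: "trH (f u) = trH (f v)" "k u = k v" using dec u v by auto
        show "(u, v) \<in> ltG i \<or> (v, u) \<in> ltG i"
        proof (cases "L u = L v")
          case True
          then have fne: "f u \<noteq> f v" using kinj u v d ne by blast
          have "total_on {w\<in>VH. trH w = trH (f u)} (ltH (trH (f u)))"
            using ordH trHlt fV u by (simp add: strict_linear_order_on_def)
          then have "(f u, f v) \<in> ltH (trH (f u)) \<or> (f v, f u) \<in> ltH (trH (f u))"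
            using fne fV u v d(1) unfolding total_on_def by auto
          then show ?thesis using True u v d(1) unfolding ltG_def by auto
        next
          case False
          then show ?thesis using u v unfolding ltG_def by auto
        qed
      qed
    qed
  next
    fix u v x y
    assume e1: "{u, v} \<in> EG" and e2: "{x, y} \<in> EG" and t1: "T u = T x" and t2: "T v = T y"
      and tne: "T u \<noteq> T v" and o1: "(u, x) \<in> ltG (T u)" and o2: "(y, v) \<in> ltG (T v)"
    have V: "u \<in> VG" "v \<in> VG" "x \<in> VG" "y \<in> VG" using graph_edge[OF gG e1] graph_edge[OF gG e2] by auto
    have dux: "trH (f u) = trH (f x)" "L u mod 3 = L x mod 3" using dec[OF V(1,3) t1] by auto
    have dvy: "trH (f v) = trH (f y)" "L v mod 3 = L y mod 3" using dec[OF V(2,4) t2] by auto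
    have l1: "L u \<le> L v + 1" "L v \<le> L u + 1" "L x \<le> L y + 1" "L y \<le> L x + 1"
      using layL e1 e2 unfolding layering_def by blast+
    have key: "int (L x) - int (L u) = int (L y) - int (L v)"
      using k1[OF dux(2) dvy(2) l1] by simp
    show False
    proof (cases "L u < L x")
      case True
      then show False using key o2 unfolding ltG_def by auto
    next
      case False
      then have eqL: "L u = L x" "L v = L y" using o1 key unfolding ltG_def by auto
      have h1: "(f u, f x) \<in> ltH (trH (f u))" using o1 eqL unfolding ltG_def by auto
      have h2: "(f y, f v) \<in> ltH (trH (f v))" using o2 eqL dvy unfolding ltG_def by auto
      show False
      proof (cases "f u = f v")
        case True
        have "f x = f y" using fE[OF e2] trHE dux(1) dvy(1) True by metis
        then have "(f x, f u) \<in> ltH (trH (f u))" using h2 True by simp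
        moreover have "strict_linear_order_on {w\<in>VH. trH w = trH (f u)} (ltH (trH (f u)))"
          using ordH trHlt fV V(1) by simp
        ultimately show False using h1 unfolding strict_linear_order_on_def irrefl_def
          by (meson transD)
      next
        case False
        then have eh1: "{f u, f v} \<in> EH" using fE[OF e1] by blast
        then have tne': "trH (f u) \<noteq> trH (f v)" using trHE by blast
        have "f x \<noteq> f y" using tne' dux(1) dvy(1) by metis
        then have eh2: "{f x, f y} \<in> EH" using fE[OF e2] by blast
        show False using crossH[OF eh1 eh2 dux(1) dvy(1) tne' h1 h2] .
      qed
    qed
  qed
  then have "track_number VG EG \<le> 3 * l * tH"
    unfolding track_number_def by (blast intro: Least_le)
  then show ?thesis by (simp add: tH_def)
qed

end
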